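(* Let $G$ and $H$ be graphs. If $H$ is a subdivision of $G$, then $\mathrm{ecrw}(G)\le 2\,\mathrm{ecrw}(H)$.
   Context: A tree-cut decomposition of a graph $G$ is a pair $\mathcal{T}=(T,\{X_t\}_{t\in V(T)})$ where $T$ is a tree and the bags $X_t\subseteq V(G)$ are pairwise disjoint (possibly empty) with $\bigcup_{t\in V(T)}X_t=V(G)$. For a node $t$ of $T$, let $T_1,\dots,T_m$ be the connected components of $T-t$ and $Z_i=\bigcup_{s\in V(T_i)}X_s$; $\mathrm{cross}_{\mathcal{T}}(t)$ is the number of edges of $G$ whose two endpoints lie in two distinct sets among $Z_1,\dots,Z_m$ (if $T$ has one node, $\mathrm{cross}_{\mathcal T}(t)=0$). The crossing number of $\mathcal{T}$ is $\max_{t}\mathrm{cross}_{\mathcal{T}}(t)$, and the thickness of $\mathcal{T}$ is $\max_t|X_t|$. The edge-crossing width of $\mathcal T$ is the maximum of its crossing number and its thickness, and $\mathrm{ecrw}(G)$ is the minimum edge-crossing width over all tree-cut decompositions of $G$. $H$ is a subdivision of $G$ if $H$ is obtained from $G$ by repeatedly subdividing edges. *)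

theory Defs
  imports Main
begin

type_synonym 'a graph = "'a set \<times> 'a set set"

definition verts :: "'a graph \<Rightarrow> 'a set" where "verts G = fst G"
definition edges :: "'a graph \<Rightarrow> 'a set set" where "edges G = snd G"

definition wf_graph :: "'a graph \<Rightarrow> bool" where
  "wf_graph G \<longleftrightarrow> finite (verts G) \<and>
     (\<forall>e\<in>edges G. \<exists>u v. e = {u, v} \<and> u \<noteq> v \<and> u \<in> verts G \<and> v \<in> verts G)"

definition adj :: "'a graph \<Rightarrow> 'a \<Rightarrow> 'a \<Rightarrow> bool" where
  "adj G u v \<longleftrightarrow> {u, v} \<in> edges G"

definition connected_graph :: "'a graph \<Rightarrow> bool" where
  "connected_graph G \<longleftrightarrow> (\<forall>u\<in>verts G. \<forall>v\<in>verts G. (adj G)\<^sup>*\<^sup>* u v)"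

definition has_cycle :: "'a graph \<Rightarrow> bool" where
  "has_cycle G \<longleftrightarrow> (\<exists>cs. length cs \<ge> 3 \<and> distinct cs \<and> set cs \<subseteq> verts G \<and>
      (\<forall>i. Suc i < length cs \<longrightarrow> adj G (cs ! i) (cs ! Suc i)) \<and>
      adj G (last cs) (hd cs))"

definition is_tree :: "'a graph \<Rightarrow> bool" where
  "is_tree T \<longleftrightarrow> wf_graph T \<and> verts T \<noteq> {} \<and> connected_graph T \<and> \<not> has_cycle T"

definition tree_cut_decomp :: "'a graph \<Rightarrow> nat graph \<Rightarrow> (nat \<Rightarrow> 'a set) \<Rightarrow> bool" where
  "tree_cut_decomp G T X \<longleftrightarrow> is_tree T \<and>
     (\<forall>s\<in>verts T. \<forall>t\<in>verts T. s \<noteq> t \<longrightarrow> X s \<inter> X t = {}) \<and>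
     (\<Union>t\<in>verts T. X t) = verts G"

text \<open>Vertex sets of the connected components of T - t.\<close>
definition comps_minus :: "nat graph \<Rightarrow> nat \<Rightarrow> nat set set" where
  "comps_minus T t =
     {{b \<in> verts T - {t}. (\<lambda>x y. adj T x y \<and> x \<noteq> t \<and> y \<noteq> t)\<^sup>*\<^sup>* a b} | a. a \<in> verts T - {t}}"

definition cross :: "'a graph \<Rightarrow> nat graph \<Rightarrow> (nat \<Rightarrow> 'a set) \<Rightarrow> nat \<Rightarrow> nat" where
  "cross G T X t = card {e \<in> edges G. \<exists>C1\<in>comps_minus T t. \<exists>C2\<in>comps_minus T t. C1 \<noteq> C2 \<and>
      (\<exists>x\<in>(\<Union>s\<in>C1. X s). \<exists>y\<in>(\<Union>s\<in>C2. X s). e = {x, y})}"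

definition crossing_number :: "'a graph \<Rightarrow> nat graph \<Rightarrow> (nat \<Rightarrow> 'a set) \<Rightarrow> nat" where
  "crossing_number G T X = Max ((\<lambda>t. cross G T X t) ` verts T)"

definition thickness :: "nat graph \<Rightarrow> (nat \<Rightarrow> 'a set) \<Rightarrow> nat" where
  "thickness T X = Max ((\<lambda>t. card (X t)) ` verts T)"

definition ec_width :: "'a graph \<Rightarrow> nat graph \<Rightarrow> (nat \<Rightarrow> 'a set) \<Rightarrow> nat" where
  "ec_width G T X = max (crossing_number G T X) (thickness T X)"

definition ecrw :: "'a graph \<Rightarrow> nat" where
  "ecrw G = (LEAST w. \<exists>T X. tree_cut_decomp G T X \<and> w = ec_width G T X)"

definition subdiv_step :: "'a graph \<Rightarrow> 'a graph \<Rightarrow> bool" where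
  "subdiv_step G H \<longleftrightarrow> (\<exists>u v w. {u, v} \<in> edges G \<and> w \<notin> verts G \<and>
      H = (insert w (verts G), (edges G - {{u, v}}) \<union> {{u, w}, {w, v}}))"

definition is_subdivision :: "'a graph \<Rightarrow> 'a graph \<Rightarrow> bool" where
  "is_subdivision H G \<longleftrightarrow> subdiv_step\<^sup>*\<^sup>* G H"

end

theory Submission
  imports Defs
begin

definition psys :: "'a graph \<Rightarrow> 'a graph \<Rightarrow> ('a set \<Rightarrow> 'a set) \<Rightarrow> ('a set \<Rightarrow> 'a set set) \<Rightarrow> bool" where
"psys G H I E \<longleftrightarrow> verts G \<subseteq> verts H \<and>
   (\<forall>e\<in>edges G. I e \<subseteq> verts H \<and> E e \<subseteq> edges H \<and> (\<forall>h\<in>E e. h \<subseteq> e \<union> I e) \<and>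
      (\<forall>u v. e = {u,v} \<longrightarrow> (\<lambda>x y. {x,y} \<in> E e)\<^sup>*\<^sup>* u v)) \<and>
   (\<forall>e\<in>edges G. \<forall>e'\<in>edges G. e \<noteq> e' \<longrightarrow> I e \<inter> I e' = {} \<and> E e \<inter> E e' = {})"

lemma wf_edge: "wf_graph H \<Longrightarrow> {a,b} \<in> edges H \<Longrightarrow> a \<in> verts H \<and> b \<in> verts H \<and> a \<noteq> b"
  unfolding wf_graph_def by (auto simp: doubleton_eq_iff)

lemma wf_fin_edges: "wf_graph H \<Longrightarrow> finite (edges H)"
proof -
  assume w: "wf_graph H"
  have "e \<subseteq> verts H" if "e \<in> edges H" for e
    using w that unfolding wf_graph_def by auto
  hence "edges H \<subseteq> Pow (verts H)" by auto
  moreover have "finite (verts H)" using w unfolding wf_graph_def by simp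
  ultimately show ?thesis by (meson finite_Pow_iff finite_subset)
qed
lemma wf_step: "wf_graph H \<Longrightarrow> subdiv_step H H' \<Longrightarrow> wf_graph H'"
proof -
  assume w: "wf_graph H" and s: "subdiv_step H H'"
  then obtain a b x where ab: "{a,b} \<in> edges H" and xn: "x \<notin> verts H"
    and H': "H' = (insert x (verts H), (edges H - {{a, b}}) \<union> {{a, x}, {x, b}})"
    unfolding subdiv_step_def by blast
  from wf_edge[OF w ab] have "a \<in> verts H" "b \<in> verts H" by auto
  with xn have "a \<noteq> x" "b \<noteq> x" by auto
  with w \<open>a \<in> verts H\<close> \<open>b \<in> verts H\<close> show ?thesis unfolding H' wf_graph_def verts_def edges_def
    by fastforce
qed

lemma psys_base: "wf_graph G \<Longrightarrow> psys G G (\<lambda>_. {}) (\<lambda>e. {e})"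
  unfolding psys_def by auto

lemma walk_lift:
  assumes "(\<lambda>x y. {x,y} \<in> S)\<^sup>*\<^sup>* u v" "{a,b} \<in> S"
  shows "(\<lambda>x y. {x,y} \<in> S - {{a,b}} \<union> {{a,w},{w,b}})\<^sup>*\<^sup>* u v"
  using assms(1)
proof (induction rule: rtranclp_induct)
  case base
  then show ?case by simp
next
  case (step y z)
  let ?R = "\<lambda>x y. {x,y} \<in> S - {{a,b}} \<union> {{a,w},{w,b}}"
  show ?case
  proof (cases "{y,z} = {a,b}")
    case True
    hence yz: "(y = a \<and> z = b) \<or> (y = b \<and> z = a)" by (simp add: doubleton_eq_iff)
    have r1: "?R a w" "?R w b" by simp_all
    have r2: "?R b w" "?R w a" by (simp_all add: insert_commute)
    have "?R\<^sup>*\<^sup>* a b" using r1 by (meson rtranclp.rtrancl_into_rtrancl r_into_rtranclp)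
    moreover have "?R\<^sup>*\<^sup>* b a" using r2 by (meson rtranclp.rtrancl_into_rtrancl r_into_rtranclp)
    ultimately have "?R\<^sup>*\<^sup>* y z" using yz by blast
    then show ?thesis using step.IH by (rule rtranclp_trans[rotated])
  next
    case False
    hence "?R y z" using step.hyps(2) by simp
    then show ?thesis using step.IH by (rule rtranclp.rtrancl_into_rtrancl[rotated])
  qed
qed

lemma psysI:
  assumes "verts G \<subseteq> verts H"
    and "\<And>e. e \<in> edges G \<Longrightarrow> I e \<subseteq> verts H"
    and "\<And>e. e \<in> edges G \<Longrightarrow> E e \<subseteq> edges H"
    and "\<And>e h. e \<in> edges G \<Longrightarrow> h \<in> E e \<Longrightarrow> h \<subseteq> e \<union> I e"
    and "\<And>e u v. e \<in> edges G \<Longrightarrow> e = {u,v} \<Longrightarrow> (\<lambda>x y. {x,y} \<in> E e)\<^sup>*\<^sup>* u v"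
    and "\<And>e e'. e \<in> edges G \<Longrightarrow> e' \<in> edges G \<Longrightarrow> e \<noteq> e' \<Longrightarrow> I e \<inter> I e' = {}"
    and "\<And>e e'. e \<in> edges G \<Longrightarrow> e' \<in> edges G \<Longrightarrow> e \<noteq> e' \<Longrightarrow> E e \<inter> E e' = {}"
  shows "psys G H I E"
  unfolding psys_def
  apply (intro conjI ballI allI impI)
  apply (rule assms(1))
  apply (erule assms(2))
  apply (erule assms(3))
  apply (erule (1) assms(4))
  apply (erule (1) assms(5))
  apply (erule (2) assms(6))
  apply (erule (2) assms(7))
  done

lemma psysD:
  assumes "psys G H I E"
  shows "verts G \<subseteq> verts H"
    and "e \<in> edges G \<Longrightarrow> I e \<subseteq> verts H"
    and "e \<in> edges G \<Longrightarrow> E e \<subseteq> edges H"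
    and "e \<in> edges G \<Longrightarrow> h \<in> E e \<Longrightarrow> h \<subseteq> e \<union> I e"
    and "e \<in> edges G \<Longrightarrow> e = {u,v} \<Longrightarrow> (\<lambda>x y. {x,y} \<in> E e)\<^sup>*\<^sup>* u v"
    and "e \<in> edges G \<Longrightarrow> e' \<in> edges G \<Longrightarrow> e \<noteq> e' \<Longrightarrow> I e \<inter> I e' = {}"
    and "e \<in> edges G \<Longrightarrow> e' \<in> edges G \<Longrightarrow> e \<noteq> e' \<Longrightarrow> E e \<inter> E e' = {}"
proof -
  have A: "verts G \<subseteq> verts H"
   and B: "\<forall>e\<in>edges G. I e \<subseteq> verts H \<and> E e \<subseteq> edges H \<and> (\<forall>h\<in>E e. h \<subseteq> e \<union> I e) \<and>
      (\<forall>u v. e = {u,v} \<longrightarrow> (\<lambda>x y. {x,y} \<in> E e)\<^sup>*\<^sup>* u v)"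
   and C: "\<forall>e\<in>edges G. \<forall>e'\<in>edges G. e \<noteq> e' \<longrightarrow> I e \<inter> I e' = {} \<and> E e \<inter> E e' = {}"
    using assms unfolding psys_def by simp_all
  show "verts G \<subseteq> verts H" by (rule A)
  show "e \<in> edges G \<Longrightarrow> I e \<subseteq> verts H" using B by simp
  show "e \<in> edges G \<Longrightarrow> E e \<subseteq> edges H" using B by simp
  show "e \<in> edges G \<Longrightarrow> h \<in> E e \<Longrightarrow> h \<subseteq> e \<union> I e" using B by simp
  show "e \<in> edges G \<Longrightarrow> e = {u,v} \<Longrightarrow> (\<lambda>x y. {x,y} \<in> E e)\<^sup>*\<^sup>* u v" using B by simp
  show "e \<in> edges G \<Longrightarrow> e' \<in> edges G \<Longrightarrow> e \<noteq> e' \<Longrightarrow> I e \<inter> I e' = {}" using C by simp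
  show "e \<in> edges G \<Longrightarrow> e' \<in> edges G \<Longrightarrow> e \<noteq> e' \<Longrightarrow> E e \<inter> E e' = {}" using C by simp
qed

lemma psys_step:
  assumes ps: "psys G H I E" and w: "wf_graph H" and s: "subdiv_step H H'"
  shows "\<exists>I' E'. psys G H' I' E'"
proof -
  from s obtain a b x where ab: "{a,b} \<in> edges H" and xn: "x \<notin> verts H"
    and H': "H' = (insert x (verts H), (edges H - {{a, b}}) \<union> {{a, x}, {x, b}})"
    unfolding subdiv_step_def by blast
  have vH': "verts H' = insert x (verts H)" and eH': "edges H' = (edges H - {{a, b}}) \<union> {{a, x}, {x, b}}"
    unfolding H' verts_def edges_def by auto
  have n1: "{a,x} \<notin> edges H" "{x,b} \<notin> edges H"
    using wf_edge[OF w, of a x] wf_edge[OF w, of x b] xn by blast+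
  define I' where "I' e = (if {a,b} \<in> E e then insert x (I e) else I e)" for e
  define E' where "E' e = (if {a,b} \<in> E e then E e - {{a,b}} \<union> {{a,x},{x,b}} else E e)" for e
  have PP: "I e \<subseteq> verts H" "E e \<subseteq> edges H" "\<And>h. h \<in> E e \<Longrightarrow> h \<subseteq> e \<union> I e"
         "\<And>u v. e = {u,v} \<Longrightarrow> (\<lambda>x y. {x,y} \<in> E e)\<^sup>*\<^sup>* u v" if "e \<in> edges G" for e
      using psysD[OF ps] that by auto
  have DD: "I e \<inter> I e' = {}" "E e \<inter> E e' = {}"
    if "e \<in> edges G" "e' \<in> edges G" "e \<noteq> e'" for e e'
    using psysD(6,7)[OF ps] that by auto
  have "psys G H' I' E'"
  proof (rule psysI)
    show "verts G \<subseteq> verts H'" using psysD(1)[OF ps] vH' by blast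
  next
    fix e assume e: "e \<in> edges G"
    show "I' e \<subseteq> verts H'" using PP(1)[OF e] vH' unfolding I'_def by auto
  next
    fix e assume e: "e \<in> edges G"
    show "E' e \<subseteq> edges H'" using PP(2)[OF e] eH' unfolding E'_def by auto
  next
    fix e h assume e: "e \<in> edges G" and h: "h \<in> E' e"
    show "h \<subseteq> e \<union> I' e"
    proof (cases "{a,b} \<in> E e")
      case True
      hence ab2: "a \<in> e \<union> I e" "b \<in> e \<union> I e" using PP(3)[OF e] by blast+
      have "h \<in> E e - {{a,b}} \<or> h = {a,x} \<or> h = {x,b}" using h True unfolding E'_def by auto
      then show ?thesis using True ab2 PP(3)[OF e] unfolding I'_def by auto
    next
      case False
      then show ?thesis using h PP(3)[OF e] unfolding E'_def I'_def by auto
    qed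
  next
    fix e u v assume e: "e \<in> edges G" and uv: "e = {u,v}"
    show "(\<lambda>y z. {y,z} \<in> E' e)\<^sup>*\<^sup>* u v"
    proof (cases "{a,b} \<in> E e")
      case True
      then show ?thesis using walk_lift[OF PP(4)[OF e uv] True, of x]
        unfolding E'_def by simp
    next
      case False
      then show ?thesis using PP(4)[OF e uv] unfolding E'_def by simp
    qed
  next
    fix e e' assume e: "e \<in> edges G" and e': "e' \<in> edges G" and ne: "e \<noteq> e'"
    show "I' e \<inter> I' e' = {}" using DD[OF e e' ne] PP(1)[OF e] PP(1)[OF e'] xn
      unfolding I'_def by auto
  next
    fix e e' assume e: "e \<in> edges G" and e': "e' \<in> edges G" and ne: "e \<noteq> e'"
    have nab: "\<not> ({a,b} \<in> E e \<and> {a,b} \<in> E e')" using DD[OF e e' ne] by blast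
    have "{a,x} \<notin> E e" "{x,b} \<notin> E e" "{a,x} \<notin> E e'" "{x,b} \<notin> E e'"
      using PP(2)[OF e] PP(2)[OF e'] n1 by blast+
    then show "E' e \<inter> E' e' = {}" using DD[OF e e' ne] nab unfolding E'_def by auto
  qed
  then show ?thesis by blast
qed

lemma subdiv_psys: "subdiv_step\<^sup>*\<^sup>* G H \<Longrightarrow> wf_graph G \<Longrightarrow> wf_graph H \<and> (\<exists>I E. psys G H I E)"
proof (induction rule: rtranclp_induct)
  case base
  then show ?case using psys_base by blast
next
  case (step y z)
  then show ?case using wf_step psys_step by blast
qed

lemma rtranclp_cross:
  assumes "R\<^sup>*\<^sup>* a b" "P a" "\<not> P b" shows "\<exists>x y. R x y \<and> P x \<and> \<not> P y"
  using assms by (induction rule: rtranclp_induct) auto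

lemma comps_mem: "C \<in> comps_minus T t \<longleftrightarrow> (\<exists>a. a \<in> verts T - {t} \<and>
   C = {b \<in> verts T - {t}. (\<lambda>x y. adj T x y \<and> x \<noteq> t \<and> y \<noteq> t)\<^sup>*\<^sup>* a b})"
  unfolding comps_minus_def mem_Collect_eq by (rule iffI) (elim exE conjE; rule exI, rule conjI, assumption+)+

lemma comps_sub: "C \<in> comps_minus T t \<Longrightarrow> C \<subseteq> verts T - {t}"
  by (auto simp: comps_mem)

lemma comp_of:
  assumes "s \<in> verts T - {t}" shows "\<exists>D \<in> comps_minus T t. s \<in> D"
proof -
  let ?D = "{b \<in> verts T - {t}. (\<lambda>x y. adj T x y \<and> x \<noteq> t \<and> y \<noteq> t)\<^sup>*\<^sup>* s b}"
  have "?D \<in> comps_minus T t" unfolding comps_mem using assms by (intro exI[of _ s]) simp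
  moreover have "s \<in> ?D" using assms by simp
  ultimately show ?thesis by (rule bexI[rotated])
qed

lemma comps_disj:
  assumes C1: "C1 \<in> comps_minus T t" and C2: "C2 \<in> comps_minus T t" and s: "s \<in> C1" "s \<in> C2"
  shows "C1 = C2"
proof -
  let ?R = "\<lambda>x y. adj T x y \<and> x \<noteq> t \<and> y \<noteq> t"
  have sy: "symp ?R" unfolding symp_def adj_def by (auto simp: insert_commute)
  have sy2: "?R\<^sup>*\<^sup>* x y \<Longrightarrow> ?R\<^sup>*\<^sup>* y x" for x y using symp_rtranclp[OF sy] by (meson sympD)
  obtain a1 where a1: "C1 = {b \<in> verts T - {t}. ?R\<^sup>*\<^sup>* a1 b}" using C1 unfolding comps_mem by blast
  obtain a2 where a2: "C2 = {b \<in> verts T - {t}. ?R\<^sup>*\<^sup>* a2 b}" using C2 unfolding comps_mem by blast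
  have "?R\<^sup>*\<^sup>* a1 s" "?R\<^sup>*\<^sup>* a2 s" using s a1 a2 by auto
  hence "?R\<^sup>*\<^sup>* a1 b \<longleftrightarrow> ?R\<^sup>*\<^sup>* a2 b" for b using sy2 by (meson rtranclp_trans)
  then show ?thesis using a1 a2 by auto
qed

lemma cross_bound:
  assumes wfH: "wf_graph H" and dec: "tree_cut_decomp H T X" and ps: "psys G H I E"
    and wfG: "wf_graph G" and tT: "t \<in> verts T"
  shows "cross G T (\<lambda>s. X s \<inter> verts G) t \<le> cross H T X t + card (X t)"
proof -
  define A where "A = {e \<in> edges G. \<exists>C1\<in>comps_minus T t. \<exists>C2\<in>comps_minus T t. C1 \<noteq> C2 \<and>
      (\<exists>x\<in>(\<Union>s\<in>C1. X s \<inter> verts G). \<exists>y\<in>(\<Union>s\<in>C2. X s \<inter> verts G). e = {x, y})}"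
  define B where "B = {e \<in> edges H. \<exists>C1\<in>comps_minus T t. \<exists>C2\<in>comps_minus T t. C1 \<noteq> C2 \<and>
      (\<exists>x\<in>(\<Union>s\<in>C1. X s). \<exists>y\<in>(\<Union>s\<in>C2. X s). e = {x, y})}"
  have cA: "cross G T (\<lambda>s. X s \<inter> verts G) t = card A" unfolding cross_def A_def by simp
  have cB: "cross H T X t = card B" unfolding cross_def B_def ..
  have disjX: "s \<in> verts T \<Longrightarrow> s' \<in> verts T \<Longrightarrow> s \<noteq> s' \<Longrightarrow> X s \<inter> X s' = {}" for s s'
    using dec unfolding tree_cut_decomp_def by blast
  have unX: "(\<Union>s\<in>verts T. X s) = verts H" using dec unfolding tree_cut_decomp_def by blast
  have finH: "finite (verts H)" using wfH unfolding wf_graph_def by blast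
  have finXt: "finite (X t)" using unX tT finH by (metis UN_upper finite_subset)
  have finA: "finite A" unfolding A_def using wf_fin_edges[OF wfG] by simp
  have finB: "finite B" unfolding B_def using wf_fin_edges[OF wfH] by simp
  define A1 where "A1 = {e\<in>A. I e \<inter> X t \<noteq> {}}"
  define A2 where "A2 = {e\<in>A. I e \<inter> X t = {}}"
  have AU: "A = A1 \<union> A2" unfolding A1_def A2_def by auto
  have AG: "A \<subseteq> edges G" unfolding A_def by blast
  have Idisj: "e \<in> edges G \<Longrightarrow> e' \<in> edges G \<Longrightarrow> e \<noteq> e' \<Longrightarrow> I e \<inter> I e' = {} \<and> E e \<inter> E e' = {}" for e e'
    using psysD(6,7)[OF ps] by blast
  have key: "E e \<inter> B \<noteq> {}" if eA2: "e \<in> A2" for e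
  proof -
    have eG: "e \<in> edges G" and It: "I e \<inter> X t = {}" using eA2 AG unfolding A2_def by auto
    from eA2 obtain C1 C2 s1 s2 x y where C1: "C1 \<in> comps_minus T t" and C2: "C2 \<in> comps_minus T t"
      and ne: "C1 \<noteq> C2" and s1: "s1 \<in> C1" and s2: "s2 \<in> C2" and x: "x \<in> X s1" and y: "y \<in> X s2"
      and exy: "e = {x,y}"
      unfolding A2_def A_def by blast
    have s1T: "s1 \<in> verts T - {t}" using comps_sub[OF C1] s1 by blast
    have s2T: "s2 \<in> verts T - {t}" using comps_sub[OF C2] s2 by blast
    define Q where "Q z = (\<exists>s\<in>C1. z \<in> X s)" for z
    have Qx: "Q x" using s1 x unfolding Q_def by blast
    have nQy: "\<not> Q y"
    proof
      assume "Q y"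
      then obtain s where s: "s \<in> C1" "y \<in> X s" unfolding Q_def by blast
      have "s \<in> verts T" using comps_sub[OF C1] s by blast
      hence "s = s2" using disjX s s2T y by blast
      thus False using comps_disj[OF C1 C2] s s2 ne by blast
    qed
    have walk: "(\<lambda>a b. {a,b} \<in> E e)\<^sup>*\<^sup>* x y" using psysD(5)[OF ps eG exy] .
    obtain a b where ab: "{a,b} \<in> E e" and Qa: "Q a" and nQb: "\<not> Q b"
      using rtranclp_cross[OF walk, of Q] Qx nQy by blast
    have abH: "{a,b} \<in> edges H" using psysD(3)[OF ps eG] ab by blast
    have bH: "b \<in> verts H" using wf_edge[OF wfH abH] by blast
    have bsub: "b \<in> e \<union> I e" using psysD(4)[OF ps eG ab] by blast
    have bt: "b \<notin> X t"
    proof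
      assume bX: "b \<in> X t"
      show False
      proof (cases "b \<in> I e")
        case True then show False using It bX by blast
      next
        case False
        hence "b = x \<or> b = y" using bsub exy by blast
        then show False using disjX s1T s2T tT x y bX by blast
      qed
    qed
    obtain s where sT: "s \<in> verts T" and bs: "b \<in> X s" using bH unX by blast
    have st: "s \<noteq> t" using bs bt by blast
    obtain D where D: "D \<in> comps_minus T t" and sD: "s \<in> D" using comp_of[of s T t] sT st by blast
    have "D \<noteq> C1" using nQb sD bs unfolding Q_def by blast
    moreover obtain s' where "s' \<in> C1" "a \<in> X s'" using Qa unfolding Q_def by blast
    ultimately have "{a,b} \<in> B" unfolding B_def using abH C1 D sD bs by blast
    with ab show ?thesis by blast
  qed
  define f1 where "f1 e = (SOME z. z \<in> I e \<inter> X t)" for e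
  define f2 where "f2 e = (SOME h. h \<in> E e \<inter> B)" for e
  have f1m: "f1 e \<in> I e \<inter> X t" if "e \<in> A1" for e
  proof -
    have "I e \<inter> X t \<noteq> {}" using that by (simp add: A1_def)
    hence "\<exists>z. z \<in> I e \<inter> X t" by blast
    thus ?thesis unfolding f1_def by (rule someI_ex)
  qed
  have f2m: "f2 e \<in> E e \<inter> B" if "e \<in> A2" for e
  proof -
    have "\<exists>z. z \<in> E e \<inter> B" using key[OF that] by blast
    thus ?thesis unfolding f2_def by (rule someI_ex)
  qed
  have "inj_on f1 A1"
  proof (rule inj_onI)
    fix e e' assume e: "e \<in> A1" and e': "e' \<in> A1" and eq: "f1 e = f1 e'"
    show "e = e'"
    proof (rule ccontr)
      assume ne: "e \<noteq> e'"
      have "e \<in> edges G" "e' \<in> edges G" using e e' AG unfolding A1_def by auto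
      hence "I e \<inter> I e' = {}" using Idisj ne by blast
      moreover have "f1 e \<in> I e" "f1 e \<in> I e'" using f1m[OF e] f1m[OF e'] eq by auto
      ultimately show False by blast
    qed
  qed
  hence c1: "card A1 \<le> card (X t)"
    using card_inj_on_le[of f1 A1 "X t"] f1m finXt by blast
  have "inj_on f2 A2"
  proof (rule inj_onI)
    fix e e' assume e: "e \<in> A2" and e': "e' \<in> A2" and eq: "f2 e = f2 e'"
    show "e = e'"
    proof (rule ccontr)
      assume ne: "e \<noteq> e'"
      have "e \<in> edges G" "e' \<in> edges G" using e e' AG unfolding A2_def by auto
      hence "E e \<inter> E e' = {}" using Idisj ne by blast
      moreover have "f2 e \<in> E e" "f2 e \<in> E e'" using f2m[OF e] f2m[OF e'] eq by auto
      ultimately show False by blast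
    qed
  qed
  hence c2: "card A2 \<le> card B"
    using card_inj_on_le[of f2 A2 B] f2m finB by blast
  have "card A \<le> card A1 + card A2" unfolding AU by (rule card_Un_le)
  then show ?thesis using c1 c2 cA cB by linarith
qed

theorem lemma3p13:
  fixes G H :: "'a graph"
  assumes "wf_graph G"
    and "is_subdivision H G"
  shows "ecrw G \<le> 2 * ecrw H"
proof -
  obtain I E where wfH: "wf_graph H" and ps: "psys G H I E"
    using subdiv_psys assms unfolding is_subdivision_def by blast
  define T0 :: "nat graph" where "T0 = ({0}, {})"
  have "is_tree T0"
  proof -
    have "\<not> has_cycle T0"
    proof
      assume "has_cycle T0"
      then obtain cs :: "nat list" where cs: "length cs \<ge> 3" "distinct cs" "set cs \<subseteq> {0}"
        unfolding has_cycle_def T0_def verts_def by (simp only: fst_conv) blast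
      have "length cs = card (set cs)" using cs(2) by (simp add: distinct_card)
      also have "\<dots> \<le> card {0::nat}" using cs(3) by (intro card_mono) simp_all
      finally show False using cs(1) by simp
    qed
    moreover have "wf_graph T0" unfolding wf_graph_def T0_def verts_def edges_def by simp
    moreover have "connected_graph T0" unfolding connected_graph_def T0_def verts_def by simp
    moreover have "verts T0 \<noteq> {}" unfolding T0_def verts_def by simp
    ultimately show ?thesis unfolding is_tree_def by blast
  qed
  hence "tree_cut_decomp H T0 (\<lambda>_. verts H)"
    unfolding tree_cut_decomp_def T0_def verts_def by auto
  hence "\<exists>w T X. tree_cut_decomp H T X \<and> w = ec_width H T X" by blast
  hence "\<exists>T X. tree_cut_decomp H T X \<and> ecrw H = ec_width H T X"
    unfolding ecrw_def by (rule LeastI_ex)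
  then obtain T X where dec: "tree_cut_decomp H T X" and eH: "ecrw H = ec_width H T X" by blast
  define X' where "X' s = X s \<inter> verts G" for s
  have VG: "verts G \<subseteq> verts H" using psysD(1)[OF ps] .
  have dec': "tree_cut_decomp G T X'"
    using dec VG unfolding tree_cut_decomp_def X'_def by blast
  have le1: "ecrw G \<le> ec_width G T X'"
    unfolding ecrw_def by (rule Least_le) (use dec' in blast)
  have tT: "is_tree T" using dec unfolding tree_cut_decomp_def by blast
  have finT: "finite (verts T)" and neT: "verts T \<noteq> {}"
    using tT unfolding is_tree_def wf_graph_def by blast+
  have unX: "(\<Union>s\<in>verts T. X s) = verts H" using dec unfolding tree_cut_decomp_def by blast
  have finH: "finite (verts H)" using wfH unfolding wf_graph_def by blast
  let ?k = "ec_width H T X"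
  have ck: "card (X t) \<le> ?k" if "t \<in> verts T" for t
  proof -
    have "card (X t) \<le> thickness T X" unfolding thickness_def using finT that by simp
    then show ?thesis unfolding ec_width_def by simp
  qed
  have crk: "cross H T X t \<le> ?k" if "t \<in> verts T" for t
  proof -
    have "cross H T X t \<le> crossing_number H T X" unfolding crossing_number_def using finT that by simp
    then show ?thesis unfolding ec_width_def by simp
  qed
  have "ec_width G T X' \<le> 2 * ?k"
  proof -
    have "crossing_number G T X' \<le> 2 * ?k"
      unfolding crossing_number_def
    proof (subst Max_le_iff)
      show "finite ((\<lambda>t. cross G T X' t) ` verts T)" using finT by simp
      show "(\<lambda>t. cross G T X' t) ` verts T \<noteq> {}" using neT by simp
      show "\<forall>a\<in>(\<lambda>t. cross G T X' t) ` verts T. a \<le> 2 * ?k"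
      proof
        fix a assume "a \<in> (\<lambda>t. cross G T X' t) ` verts T"
        then obtain t where t: "t \<in> verts T" and a: "a = cross G T X' t" by blast
        have "a \<le> cross H T X t + card (X t)"
          using cross_bound[OF wfH dec ps assms(1) t] a unfolding X'_def by simp
        then show "a \<le> 2 * ?k" using ck[OF t] crk[OF t] by linarith
      qed
    qed
    moreover have "thickness T X' \<le> 2 * ?k"
      unfolding thickness_def
    proof (subst Max_le_iff)
      show "finite ((\<lambda>t. card (X' t)) ` verts T)" using finT by simp
      show "(\<lambda>t. card (X' t)) ` verts T \<noteq> {}" using neT by simp
      show "\<forall>a\<in>(\<lambda>t. card (X' t)) ` verts T. a \<le> 2 * ?k"
      proof
        fix a assume "a \<in> (\<lambda>t. card (X' t)) ` verts T"
        then obtain t where t: "t \<in> verts T" and a: "a = card (X' t)" by blast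
        have "finite (X t)" using unX t finH by (metis UN_upper finite_subset)
        hence "card (X' t) \<le> card (X t)" unfolding X'_def by (simp add: card_mono)
        then show "a \<le> 2 * ?k" using ck[OF t] a by linarith
      qed
    qed
    ultimately show ?thesis unfolding ec_width_def by simp
  qed
  then show ?thesis using le1 eH by linarith
qed

end
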